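(* Let $m,a,b,t\in\mathbb{N}$ with $m\geq 3$, $a\geq 1$, $t\in\{2,\ldots,m-1\}$ and $(t-1)(am+1)<bm+t<t(am+1)$, let $S=\langle m,\ am+1,\ bm+t\rangle$ (a MANS-semigroup with embedding dimension $3$), $q=\left\lfloor\frac{m-1}{t}\right\rfloor$ and $r=(m-1)\bmod t$. (1) If $t$ divides $m$, then $\mathrm{PF}(S)=\{q(bm+t)+r(am+1)-m\}$. (2) If $t$ does not divide $m$, then $\mathrm{PF}(S)=\{(q-1)(bm+t)+(t-1)(am+1)-m,\ q(bm+t)+r(am+1)-m\}$.
   Context: $\mathbb{N}=\{0,1,2,\ldots\}$. $\langle A\rangle$ is the submonoid of $(\mathbb{N},+)$ generated by $A$; a numerical semigroup is a submonoid of $\mathbb{N}$ with finite complement. A pseudo-Frobenius number of $S$ is an $x\in\mathbb{Z}\setminus S$ with $x+s\in S$ for all $s\in S\setminus\{0\}$; $\mathrm{PF}(S)$ is the set of them. A MANS-semigroup is a numerical semigroup with $w(1)<\cdots<w(\mathrm{m}(S)-1)$, where $\mathrm{m}(S)$ is the least element of $S\setminus\{0\}$ and $w(i)$ the least element of $S$ congruent to $i$ modulo $\mathrm{m}(S)$. $a\bmod b$ is the remainder of the division of $a$ by $b$. *)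

theory Defs
  imports Main
begin

inductive_set gen_monoid :: "nat set \<Rightarrow> nat set" for A :: "nat set" where
  zero: "0 \<in> gen_monoid A"
| add: "a \<in> A \<Longrightarrow> x \<in> gen_monoid A \<Longrightarrow> a + x \<in> gen_monoid A"

definition PF :: "nat set \<Rightarrow> int set" where
  "PF S = {x :: int. x \<notin> int ` S \<and> (\<forall>s\<in>S. s \<noteq> 0 \<longrightarrow> x + int s \<in> int ` S)}"

end

theory Submission imports Defs begin

lemma gm_add: "x \<in> gen_monoid A \<Longrightarrow> y \<in> gen_monoid A \<Longrightarrow> x + y \<in> gen_monoid A"
  by (induction x rule: gen_monoid.induct) (auto simp: add.assoc intro: gen_monoid.add)

lemma gm_mult: "g \<in> A \<Longrightarrow> c * g \<in> gen_monoid A"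
  by (induction c) (auto intro: gen_monoid.intros)

locale ctx =
  fixes m a b t :: nat
  assumes m3: "m \<ge> 3" and a1: "a \<ge> 1" and t2: "2 \<le> t" and tm: "t \<le> m - 1"
    and lo: "(t - 1) * (a * m + 1) < b * m + t" and up: "b * m + t < t * (a * m + 1)"
begin

definition f :: "nat \<Rightarrow> nat" where
  "f j = (j div t) * (b*m+t) + (j mod t) * (a*m+1)"

lemma f_eq: "f j = m * ((j div t)*b + (j mod t)*a) + j"
proof -
  have "j = (j div t) * t + j mod t" by simp
  then have "f j = (j div t) * (b*m) + (j mod t) * (a*m) + ((j div t) * t + j mod t)"
    unfolding f_def by (simp add: algebra_simps)
  also have "\<dots> = m * ((j div t)*b + (j mod t)*a) + j" by (simp add: algebra_simps)
  finally show ?thesis .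
qed

lemma f_0: "f 0 = 0" by (simp add: f_def)

lemma f_mod: "f j mod m = j mod m"
  by (simp add: f_eq)

lemma f_suc1: "Suc (j mod t) \<noteq> t \<Longrightarrow> f (Suc j) = f j + (a*m+1)"
proof -
  assume False: "Suc (j mod t) \<noteq> t"
  then have "Suc j mod t = Suc (j mod t)" "Suc j div t = j div t" by (simp_all add: mod_Suc div_Suc)
  then show ?thesis using False unfolding f_def by (simp add: algebra_simps)
qed

lemma f_suc2: "Suc (j mod t) = t \<Longrightarrow> f (Suc j) + (t-1)*(a*m+1) = f j + (b*m+t)"
proof -
  assume True: "Suc (j mod t) = t"
  then have "Suc j mod t = 0" "Suc j div t = Suc (j div t)" "j mod t = t - 1" by (simp_all add: mod_Suc div_Suc)
  then show ?thesis unfolding f_def by (simp add: algebra_simps)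
qed

lemma f_less_suc: "f j < f (Suc j)"
proof (cases "Suc (j mod t) = t")
  case True then show ?thesis using f_suc2[OF True] lo by linarith
next
  case False then show ?thesis using f_suc1[OF False] by simp
qed

lemma f_mono: "j \<le> k \<Longrightarrow> f j \<le> f k"
  using lift_Suc_mono_le[of f, OF less_imp_le[OF f_less_suc]] by blast

lemma f_yz: "f (y + z*t) \<le> y*(a*m+1) + z*(b*m+t)"
proof -
  have tp: "t > 0" using t2 by simp
  have d: "(y + z*t) div t = z + y div t" "(y + z*t) mod t = y mod t" using tp by simp_all
  have "(y div t) * (b*m+t) \<le> (y div t) * (t * (a*m+1))" using up by simp
  moreover have "y * (a*m+1) = (y div t) * (t * (a*m+1)) + (y mod t) * (a*m+1)"
    by (metis div_mult_mod_eq add_mult_distrib mult.assoc mult.commute)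
  ultimately show ?thesis unfolding f_def d by (simp add: algebra_simps)
qed

abbreviation S where "S \<equiv> gen_monoid {m, a*m+1, b*m+t}"

lemma repr: "n \<in> S \<Longrightarrow> \<exists>k y z. n = k*m + y*(a*m+1) + z*(b*m+t)"
proof (induction n rule: gen_monoid.induct)
  case zero then show ?case by (intro exI[of _ 0]) simp
next
  case (add g x)
  then obtain k y z where "x = k*m + y*(a*m+1) + z*(b*m+t)" by blast
  with add(1) show ?case
    apply auto
      apply (rule exI[of _ "Suc k"], rule exI[of _ y], rule exI[of _ z], simp)
     apply (rule exI[of _ k], rule exI[of _ "Suc y"], rule exI[of _ z], simp)
    apply (rule exI[of _ k], rule exI[of _ y], rule exI[of _ "Suc z"], simp)
    done
qed

lemma f_in: "f j \<in> S"
  unfolding f_def by (intro gm_add gm_mult) auto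

lemma memS: "n \<in> S \<longleftrightarrow> f (n mod m) \<le> n"
proof
  assume "n \<in> S"
  then obtain k y z where n: "n = k*m + y*(a*m+1) + z*(b*m+t)" using repr by blast
  have "n = m * (k + y*a + z*b) + (y + z*t)" unfolding n by (simp add: algebra_simps)
  then have "n mod m = (y + z*t) mod m" by simp
  then have "f (n mod m) \<le> f (y + z*t)" by (simp add: f_mono)
  also have "\<dots> \<le> y*(a*m+1) + z*(b*m+t)" by (rule f_yz)
  also have "\<dots> \<le> n" using n by simp
  finally show "f (n mod m) \<le> n" .
next
  assume h: "f (n mod m) \<le> n"
  have "m dvd (n - f (n mod m))"
    using h f_mod[of "n mod m"] by (simp add: mod_eq_dvd_iff_nat[symmetric])
  then obtain k where k: "n - f (n mod m) = k * m" by (metis dvd_def mult.commute)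
  have "f (n mod m) + k*m \<in> S" by (intro gm_add f_in gm_mult) auto
  moreover have "n = f (n mod m) + k*m" using h k by simp
  ultimately show "n \<in> S" by simp
qed

lemma memS': "r < m \<Longrightarrow> m*K + r \<in> S \<longleftrightarrow> f r \<le> m*K + r"
proof -
  assume "r < m"
  then have "(m*K + r) mod m = r" by simp
  then show ?thesis using memS[of "m*K+r"] by simp
qed

lemma b1: "b \<ge> 1"
proof (rule ccontr)
  assume "\<not> b \<ge> 1"
  then have "b = 0" by simp
  with lo have "(t - 1) * (a * m + 1) < t" by simp
  moreover have "a*m + 1 \<ge> 2" proof -
    have "1*1 \<le> a*m" using a1 m3 by (intro mult_le_mono) auto
    then show ?thesis by simp
  qed
  then have "(t-1) * (a*m+1) \<ge> (t-1)*2" by simp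
  ultimately show False using t2 by linarith
qed

lemma gap: "(b*m+t) + m \<le> t*(a*m+1)"
proof -
  from up have "b*m < (t*a)*m" by (simp add: algebra_simps)
  then have "b < t*a" by simp
  then have "(b+1)*m \<le> (t*a)*m" by (intro mult_le_mono1) simp
  then show ?thesis by (simp add: algebra_simps)
qed

lemma int_mem: "int n \<in> int ` S \<longleftrightarrow> n \<in> S" by auto

lemma neg_notin: "x < 0 \<Longrightarrow> x \<notin> int ` S" by auto

lemma PF_gen: "x \<in> PF S \<longleftrightarrow> x \<notin> int`S \<and> x + int m \<in> int`S \<and> x + int(a*m+1) \<in> int`S \<and> x + int(b*m+t) \<in> int`S"
proof
  assume "x \<in> PF S"
  then show "x \<notin> int`S \<and> x + int m \<in> int`S \<and> x + int(a*m+1) \<in> int`S \<and> x + int(b*m+t) \<in> int`S"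
  proof -
    have gs: "g \<in> S" if "g \<in> {m, a*m+1, b*m+t}" for g
      using gen_monoid.add[OF that gen_monoid.zero] by simp
    have nz: "m \<noteq> 0" "a*m+1 \<noteq> 0" "b*m+t \<noteq> 0" using m3 t2 by auto
    have P: "x \<notin> int`S" "\<And>s. s \<in> S \<Longrightarrow> s \<noteq> 0 \<Longrightarrow> x + int s \<in> int`S"
      using \<open>x \<in> PF S\<close> unfolding PF_def by auto
    have "x + int m \<in> int`S" by (rule P(2)[OF gs nz(1)]) simp
    moreover have "x + int (a*m+1) \<in> int`S" by (rule P(2)[OF gs nz(2)]) simp
    moreover have "x + int (b*m+t) \<in> int`S" by (rule P(2)[OF gs nz(3)]) simp
    ultimately show ?thesis using P(1) by blast
  qed
next
  assume h: "x \<notin> int`S \<and> x + int m \<in> int`S \<and> x + int(a*m+1) \<in> int`S \<and> x + int(b*m+t) \<in> int`S"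
  have "s \<noteq> 0 \<longrightarrow> x + int s \<in> int ` S" if "s \<in> S" for s
    using that
  proof (induction s rule: gen_monoid.induct)
    case zero then show ?case by simp
  next
    case (add g y)
    have g: "x + int g \<in> int ` S" using add(1) h by auto
    show ?case
    proof (cases "y = 0")
      case True then show ?thesis using g by simp
    next
      case False
      with add.IH obtain u where u: "u \<in> S" "x + int y = int u" by auto
      have "g + u \<in> S" using add(1) u(1) by (rule gen_monoid.add)
      moreover have "x + int (g + y) = int (g + u)" using u(2) by simp
      ultimately show ?thesis by (metis image_eqI)
    qed
  qed
  then show "x \<in> PF S" using h unfolding PF_def by auto
qed

definition g :: "nat \<Rightarrow> nat" where "g j = (j div t)*b + (j mod t)*a"

lemma fg: "f j = m * g j + j" unfolding g_def by (rule f_eq)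

lemma f_add_t: "f (i + t) = f i + (b*m+t)"
proof -
  have tp: "t > 0" using t2 by simp
  then have "(i + t) div t = Suc (i div t)" "(i+t) mod t = i mod t" by (simp_all add: div_add_self2)
  then show ?thesis unfolding f_def by (simp add: algebra_simps)
qed

lemma shift_a: "int (m*(g i + a - 1) + (i+1)) = int (f i) + int (a*m+1) - int m"
proof -
  have "m*(g i + a - 1) + (i+1) + m = f i + (a*m+1)" using fg[of i] a1
    by (cases a) (simp_all add: algebra_simps)
  then have "int (m*(g i + a - 1) + (i+1)) + int m = int (f i) + int (a*m+1)"
    by (metis of_nat_add)
  then show ?thesis by linarith
qed

lemma shift_b: "int (m*(g i + b - 1) + (i+t)) = int (f i) + int (b*m+t) - int m"
proof -
  have "m*(g i + b - 1) + (i+t) + m = f i + (b*m+t)" using fg[of i] b1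
    by (cases b) (simp_all add: algebra_simps)
  then have "int (m*(g i + b - 1) + (i+t)) + int m = int (f i) + int (b*m+t)"
    by (metis of_nat_add)
  then show ?thesis by linarith
qed

lemma shift_b2: "m \<le> i + t \<Longrightarrow> int (m*(g i + b) + (i+t-m)) = int (f i) + int (b*m+t) - int m"
proof -
  assume c: "m \<le> i + t"
  have "m*(g i + b) + (i+t-m) + m = f i + (b*m+t)" using fg[of i] c
    by (simp add: algebra_simps)
  then have "int (m*(g i + b) + (i+t-m)) + int m = int (f i) + int (b*m+t)"
    by (metis of_nat_add)
  then show ?thesis by linarith
qed

lemma PFc_dest:
  assumes "x \<in> PF S"
  shows "\<exists>i. 1 \<le> i \<and> i < m \<and> x = int (f i) - int m \<and> (i mod t = t-1 \<or> i = m-1) \<and> m \<le> i + t"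
proof -
  from assms have h: "x \<notin> int`S" "x + int m \<in> int`S" "x + int(a*m+1) \<in> int`S" "x + int(b*m+t) \<in> int`S"
    using PF_gen by blast+
  obtain w where w: "w \<in> S" "x + int m = int w" using h(2) by auto
  define i where "i = w mod m"
  have im: "i < m" using m3 unfolding i_def by simp
  have fi: "f i \<le> w" using w(1) memS unfolding i_def by simp
  have wq: "w = m * (w div m) + i" unfolding i_def by simp
  have "w = f i"
  proof (rule ccontr)
    assume ne: "w \<noteq> f i"
    have "f i = m * g i + i" by (rule fg)
    then have "m * g i \<le> m * (w div m)" using fi wq by linarith
    then have "g i \<le> w div m" using m3 by simp
    moreover have "g i \<noteq> w div m" using ne wq \<open>f i = m * g i + i\<close> by auto
    ultimately have lt: "g i < w div m" by simp
    define K where "K = w div m - 1"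
    have K: "w div m = Suc K" "g i \<le> K" using lt unfolding K_def by auto
    have "w - m = m * K + i" using wq K(1) by simp
    moreover have "f i \<le> m*K + i" using fg[of i] K(2) by simp
    ultimately have "w - m \<in> S" using memS'[OF im] by simp
    moreover have "x = int (w - m)" using w(2) wq K(1) by simp
    ultimately show False using h(1) by auto
  qed
  then have x: "x = int (f i) - int m" using w(2) by simp
  have i1: "1 \<le> i"
  proof (rule ccontr)
    assume "\<not> 1 \<le> i"
    then have "i = 0" by simp
    then have "x = - int m" using x f_0 by simp
    then have "x + int (a*m+1) = int (m*(a-1) + 1)" using a1 by (simp add: algebra_simps of_nat_diff)
    then have "m*(a-1) + 1 \<in> S" using h(3) int_mem by metis
    then have "f 1 \<le> m*(a-1) + 1" using memS'[of 1 "a-1"] m3 by simp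
    moreover have "f 1 = a*m + 1" unfolding f_def using t2 by simp
    moreover have "m*(a-1) + m = a*m" using a1 by (cases a) (simp_all add: algebra_simps)
    ultimately show False using m3 by linarith
  qed
  have c1: "i mod t = t-1 \<or> i = m-1"
  proof (rule ccontr)
    assume n: "\<not> (i mod t = t-1 \<or> i = m-1)"
    then have s1: "Suc (i mod t) \<noteq> t" by auto
    have i1m: "i + 1 < m" using n im by linarith
    have "x + int (a*m+1) = int (m*(g i + a - 1) + (i+1))" using x shift_a by simp
    then have "m*(g i + a - 1) + (i+1) \<in> S" using h(3) int_mem by metis
    then have "f (i+1) \<le> m*(g i + a - 1) + (i+1)" using memS'[OF i1m] by simp
    moreover have "f (i+1) = m * g i + i + a*m + 1" using f_suc1[OF s1] fg[of i] by simp
    moreover have "m*(g i + a - 1) + m = m*g i + a*m" using a1 by (cases a) (simp_all add: algebra_simps)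
    ultimately show False using m3 by linarith
  qed
  have c2: "m \<le> i + t"
  proof (rule ccontr)
    assume n: "\<not> m \<le> i + t"
    then have itm: "i + t < m" by simp
    have "x + int (b*m+t) = int (m*(g i + b - 1) + (i+t))" using x shift_b by simp
    then have "m*(g i + b - 1) + (i+t) \<in> S" using h(4) int_mem by metis
    then have "f (i+t) \<le> m*(g i + b - 1) + (i+t)" using memS'[OF itm] by simp
    moreover have "f (i+t) = m * g i + i + b*m + t" using f_add_t fg[of i] by simp
    moreover have "m*(g i + b - 1) + m = m*g i + b*m" using b1 by (cases b) (simp_all add: algebra_simps)
    ultimately show False using m3 by linarith
  qed
  show ?thesis using i1 im x c1 c2 by blast
qed

lemma PFc_intro:
  assumes i1: "1 \<le> i" and im: "i < m" and c1: "i mod t = t-1 \<or> i = m-1" and c2: "m \<le> i + t"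
  shows "int (f i) - int m \<in> PF S"
proof -
  let ?x = "int (f i) - int m"
  have A: "?x \<notin> int ` S"
  proof (cases "g i = 0")
    case True
    then have "?x < 0" using fg[of i] im by simp
    then show ?thesis by (rule neg_notin)
  next
    case False
    then obtain G where G: "g i = Suc G" by (metis not0_implies_Suc)
    have "?x = int (m*G + i)" using fg[of i] G by (simp add: algebra_simps)
    moreover have "m*G + i \<notin> S" using memS'[OF im, of G] fg[of i] G m3 by simp
    ultimately show ?thesis using int_mem by metis
  qed
  have B: "?x + int m \<in> int ` S" using f_in by simp
  have C: "?x + int (a*m+1) \<in> int ` S"
  proof (cases "i + 1 = m")
    case True
    have "?x + int (a*m+1) = int (m*(g i + a) + 0)" using fg[of i] True
      by (simp add: algebra_simps)
    moreover have "m*(g i + a) + 0 \<in> S" using memS'[of 0 "g i + a"] m3 f_0 by simp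
    ultimately show ?thesis using int_mem by metis
  next
    case False
    then have i1m: "i + 1 < m" using im by simp
    have s1: "Suc (i mod t) = t" using c1 False t2 im by auto
    have "?x + int (a*m+1) = int (m*(g i + a - 1) + (i+1))" using shift_a by simp
    moreover have "m*(g i + a - 1) + (i+1) \<in> S"
    proof -
      have e: "f (i+1) + (t-1)*(a*m+1) = f i + (b*m+t)" using f_suc2[OF s1] by simp
      have t1: "t*(a*m+1) = (t-1)*(a*m+1) + (a*m+1)" using t2
        by (cases t) (simp_all add: algebra_simps)
      have "f (i+1) + m \<le> f i + (a*m+1)" using e gap t1 by linarith
      moreover have "m*(g i + a - 1) + (i+1) + m = f i + (a*m+1)" using fg[of i] a1
        by (cases a) (simp_all add: algebra_simps)
      ultimately have "f (i+1) \<le> m*(g i + a - 1) + (i+1)" by linarith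
      then show ?thesis using memS'[OF i1m] by simp
    qed
    ultimately show ?thesis using int_mem by metis
  qed
  have D: "?x + int (b*m+t) \<in> int ` S"
  proof -
    have r: "i + t - m < m" using im tm by linarith
    have "?x + int (b*m+t) = int (m*(g i + b) + (i + t - m))" using shift_b2[OF c2] by simp
    moreover have "m*(g i + b) + (i + t - m) \<in> S"
    proof -
      have "f (i + t - m) \<le> f i" using f_mono tm by simp
      also have "\<dots> \<le> m*(g i + b) + (i + t - m)"
      proof -
        have "m * g i + m \<le> m*(g i + b)" using b1 by (simp add: add_mult_distrib2)
        moreover have "i + t - m + m = i + t" using c2 by simp
        ultimately show ?thesis using fg[of i] by linarith
      qed
      finally show ?thesis using memS'[OF r] by simp
    qed
    ultimately show ?thesis using int_mem by metis
  qed
  show ?thesis using A B C D PF_gen by blast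
qed

lemma PF_char: "PF S = {int (f i) - int m | i. 1 \<le> i \<and> i < m \<and> (i mod t = t-1 \<or> i = m-1) \<and> m \<le> i + t}"
  using PFc_dest PFc_intro by blast

lemma dvd_case: assumes "t dvd m" "i < m" "i mod t = t - 1" "m \<le> i + t" shows "i = m - 1"
proof -
  have tp: "t > 0" using t2 by simp
  have "t dvd i + 1" using assms(3) tp
    by (metis Suc_diff_1 Suc_eq_plus1 mod_Suc mod_0_imp_dvd)
  then have "t dvd m - (i+1)" using assms(1) dvd_diff_nat by blast
  moreover have "m - (i+1) < t" using assms(2,4) tp by linarith
  ultimately have "m - (i+1) = 0" by (metis dvd_imp_le neq0_conv not_le)
  then show ?thesis using assms(2) by simp
qed

lemma ndvd_case: assumes "\<not> t dvd m" "i < m" "i mod t = t - 1" "m \<le> i + t" "i \<noteq> m - 1"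
  shows "i = ((m-1) div t) * t - 1"
proof -
  have tp: "t > 0" using t2 by simp
  have "t dvd i + 1" using assms(3) tp
    by (metis Suc_diff_1 Suc_eq_plus1 mod_Suc mod_0_imp_dvd)
  then obtain k where k: "i + 1 = k * t" by (metis dvd_def mult.commute)
  define q where "q = (m-1) div t"
  define r where "r = (m-1) mod t"
  have mq: "m - 1 = q*t + r" unfolding q_def r_def by simp
  have rt: "r < t" unfolding r_def using tp by simp
  have "k*t < (q+1)*t" using k assms(2,5) mq rt by (simp add: algebra_simps)
  then have "k < q + 1" by (metis mult_less_cancel2)
  moreover have "(q-1)*t < k*t"
  proof -
    have "(q-1)*t \<le> q*t - t" by (simp add: diff_mult_distrib)
    then show ?thesis using k assms(4) mq m3 by linarith
  qed
  then have "q - 1 < k" by (metis mult_less_cancel2)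
  ultimately have "k = q" by linarith
  then show ?thesis using k unfolding q_def by simp
qed

end
theorem proposition3p22:
  fixes m a b t :: nat
  assumes "m \<ge> 3" and "a \<ge> 1" and "2 \<le> t" and "t \<le> m - 1"
    and "(t - 1) * (a * m + 1) < b * m + t" and "b * m + t < t * (a * m + 1)"
  defines "S \<equiv> gen_monoid {m, a * m + 1, b * m + t}"
    and "q \<equiv> (m - 1) div t" and "r \<equiv> (m - 1) mod t"
  shows "(t dvd m \<longrightarrow>
            PF S = {int q * int (b * m + t) + int r * int (a * m + 1) - int m})
       \<and> (\<not> t dvd m \<longrightarrow>
            PF S = {(int q - 1) * int (b * m + t) + (int t - 1) * int (a * m + 1) - int m,
                    int q * int (b * m + t) + int r * int (a * m + 1) - int m})"
proof -
  interpret c: ctx m a b t using assms(1-6) by unfold_locales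
  have tp: "t > 0" using assms(3) by simp
  have PFS: "PF S = {int (c.f i) - int m | i. 1 \<le> i \<and> i < m \<and> (i mod t = t-1 \<or> i = m-1) \<and> m \<le> i + t}"
    unfolding S_def by (rule c.PF_char)
  have fm1: "int (c.f (m-1)) - int m = int q * int (b * m + t) + int r * int (a * m + 1) - int m"
  proof -
    have "c.f (m-1) = q * (b * m + t) + r * (a * m + 1)" unfolding c.f_def q_def r_def by simp
    then show ?thesis by (simp add: algebra_simps)
  qed
  have cm1: "1 \<le> m-1 \<and> m-1 < m \<and> ((m-1) mod t = t-1 \<or> m-1 = m-1) \<and> m \<le> (m-1) + t"
    using assms(1,3) by auto
  show ?thesis
  proof (intro conjI impI)
    assume d: "t dvd m"
    have "PF S = {int (c.f (m-1)) - int m}"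
    proof (rule set_eqI, rule iffI)
      fix x assume "x \<in> PF S"
      then obtain i where i: "x = int (c.f i) - int m" "1 \<le> i" "i < m"
        "i mod t = t-1 \<or> i = m-1" "m \<le> i + t" unfolding PFS by blast
      have "i = m - 1" using i(4) c.dvd_case[OF d i(3) _ i(5)] by blast
      then show "x \<in> {int (c.f (m-1)) - int m}" using i(1) by simp
    next
      fix x assume "x \<in> {int (c.f (m-1)) - int m}"
      then show "x \<in> PF S" unfolding PFS using cm1 by blast
    qed
    then show "PF S = {int q * int (b * m + t) + int r * int (a * m + 1) - int m}" using fm1 by simp
  next
    assume d: "\<not> t dvd m"
    have "0 < (m-1) div t" using assms(4) tp by (subst div_greater_zero_iff) simp
    then have q1: "q \<ge> 1" unfolding q_def by simp
    define j where "j = q * t - 1"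
    have jq: "j = (q-1)*t + (t-1)" unfolding j_def using q1 tp
      by (cases q) (simp_all add: algebra_simps)
    have e: "j = (t-1) + (q-1)*t" using jq by simp
    have "j div t = (q-1) + (t-1) div t" unfolding e using tp by (intro div_mult_self1) simp
    moreover have "j mod t = (t-1) mod t" unfolding e by (rule mod_mult_self1)
    ultimately have jd: "j div t = q - 1" "j mod t = t - 1" using tp by simp_all
    have rne: "r \<noteq> t - 1"
    proof
      assume "r = t - 1"
      moreover have "m - 1 = q*t + r" unfolding q_def r_def by simp
      ultimately have "m = (q+1)*t" using assms(1) tp by (simp add: algebra_simps)
      then show False using d by simp
    qed
    have rt: "r < t" unfolding r_def using tp by simp
    have mq: "m - 1 = q*t + r" unfolding q_def r_def by simp
    have cj: "1 \<le> j \<and> j < m \<and> (j mod t = t-1 \<or> j = m-1) \<and> m \<le> j + t"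
    proof -
      have "q*t \<ge> t" using q1 by simp
      then have qt: "t \<le> q*t" .
      have "1 \<le> j" unfolding j_def using qt assms(3) by linarith
      moreover have "j < m" unfolding j_def using qt mq assms(1,3) by linarith
      moreover have "m \<le> j + t" unfolding j_def using qt mq rne rt assms(1,3) by linarith
      ultimately show ?thesis using jd(2) by blast
    qed
    have fj: "int (c.f j) - int m = (int q - 1) * int (b * m + t) + (int t - 1) * int (a * m + 1) - int m"
    proof -
      have "c.f j = (q-1) * (b*m+t) + (t-1) * (a*m+1)" unfolding c.f_def jd by simp
      then have "int (c.f j) = int (q-1) * int (b*m+t) + int (t-1) * int (a*m+1)" by (simp only: of_nat_add of_nat_mult)
      moreover have "int (q-1) = int q - 1" "int (t-1) = int t - 1" using q1 tp by (simp_all add: of_nat_diff)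
      ultimately show ?thesis by (simp only:)
    qed
    have "PF S = {int (c.f j) - int m, int (c.f (m-1)) - int m}"
    proof (rule set_eqI, rule iffI)
      fix x assume "x \<in> PF S"
      then obtain i where i: "x = int (c.f i) - int m" "1 \<le> i" "i < m"
        "i mod t = t-1 \<or> i = m-1" "m \<le> i + t" unfolding PFS by blast
      show "x \<in> {int (c.f j) - int m, int (c.f (m-1)) - int m}"
      proof (cases "i = m - 1")
        case True then show ?thesis using i(1) by simp
      next
        case False
        then have "i mod t = t - 1" using i(4) by simp
        then have "i = j" using c.ndvd_case[OF d i(3) _ i(5) False] unfolding j_def q_def by simp
        then show ?thesis using i(1) by simp
      qed
    next
      fix x assume "x \<in> {int (c.f j) - int m, int (c.f (m-1)) - int m}"
      then have "x = int (c.f j) - int m \<or> x = int (c.f (m-1)) - int m" by simp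
      then show "x \<in> PF S"
      proof
        assume "x = int (c.f j) - int m"
        then show ?thesis unfolding PFS using cj by blast
      next
        assume "x = int (c.f (m-1)) - int m"
        then show ?thesis unfolding PFS using cm1 by blast
      qed
    qed
    then show "PF S = {(int q - 1) * int (b * m + t) + (int t - 1) * int (a * m + 1) - int m,
                    int q * int (b * m + t) + int r * int (a * m + 1) - int m}" using fm1 fj by simp
  qed
qed

end
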